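(* Let $d\in\{2,3\}$, $\kappa>0$, $\sigma^{-1}=2\kappa$, $\rho(s)=(2/s)^{d/2}\Gamma(d/2+1)J_{d/2}(s)$ (with $\rho(0)=1$), and $k(t)=\rho(\sigma^{-1}|t|)$ for $t\in\mathbb{R}^d$. Let $\mathfrak{d}(x,x')=\sigma^{-1}|x-x'|/\sqrt{d+2}$ and $|v|_\ast=\sigma^{-1}|v|/\sqrt{d+2}$ for $v\in\mathbb{R}^d$. Then for all $x,x'\in\mathbb{R}^d$ with $\mathfrak{d}(x,x')\le r_{\mathrm{near}}:=1/\sqrt5$ and all $v\in\mathbb{R}^d$, $$-v^T\nabla^2k(x-x')\,v\ \ge\ \bar\epsilon_2\,|v|_\ast^2,\qquad\text{where }\bar\epsilon_2:=0.6<r_{\mathrm{near}}^{-2}.$$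
   Context: $J_{d/2}$ is the Bessel function of the first kind of order $d/2$. The function $k$ is the kernel $K(x,x')=k(x-x')=\int_{B(0,2\kappa)}e^{i\langle\omega,x-x'\rangle}\,d\Lambda(\omega)$ with $\Lambda$ uniform on $B(0,2\kappa)$; it is smooth on $\mathbb{R}^d$. The quantity $v^T\nabla^2k(x-x')v$ is the paper's $K^{(02)}(x,x')[v,v]$, $\mathfrak{d}$ is its Fisher metric distance and $|v|_\ast$ its norm $|v|_x$. *)

theory Defs
  imports "HOL-Analysis.Analysis"
begin

definition bessel_J :: "real \<Rightarrow> real \<Rightarrow> real" where
  "bessel_J nu s = (\<Sum>m. (-1) ^ m / (fact m * Gamma (real m + nu + 1)) * (s / 2) ^ (2 * m))
                   * (s / 2) powr nu"

definition rho :: "nat \<Rightarrow> real \<Rightarrow> real" where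
  "rho d s = (if s = 0 then 1
              else (2 / s) powr (real d / 2) * Gamma (real d / 2 + 1) * bessel_J (real d / 2) s)"

definition kern :: "real \<Rightarrow> real ^ 'n \<Rightarrow> real" where
  "kern \<kappa> t = rho CARD('n) (2 * \<kappa> * norm t)"

definition partial :: "(real ^ 'n \<Rightarrow> real) \<Rightarrow> 'n \<Rightarrow> real ^ 'n \<Rightarrow> real" where
  "partial f j y = deriv (\<lambda>u. f (y + u *\<^sub>R axis j 1)) 0"

definition hessian :: "(real ^ 'n \<Rightarrow> real) \<Rightarrow> real ^ 'n \<Rightarrow> 'n \<Rightarrow> 'n \<Rightarrow> real" where
  "hessian f x i j = partial (partial f j) i x"

definition hessian_form :: "(real ^ 'n \<Rightarrow> real) \<Rightarrow> real ^ 'n \<Rightarrow> real ^ 'n \<Rightarrow> real" where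
  "hessian_form f x v = (\<Sum>i\<in>UNIV. \<Sum>j\<in>UNIV. v $ i * hessian f x i j * v $ j)"

definition fisher_dist :: "real \<Rightarrow> real ^ 'n \<Rightarrow> real ^ 'n \<Rightarrow> real" where
  "fisher_dist \<kappa> x x' = 2 * \<kappa> * norm (x - x') / sqrt (real CARD('n) + 2)"

definition fisher_norm :: "real \<Rightarrow> real ^ 'n \<Rightarrow> real" where
  "fisher_norm \<kappa> v = 2 * \<kappa> * norm v / sqrt (real CARD('n) + 2)"

end

theory Submission imports Defs begin


definition cc :: "real \<Rightarrow> nat \<Rightarrow> real" where
  "cc \<nu> m = (-1)^m / (fact m * pochhammer (\<nu>+1) m * 4^m)"
definition FF :: "real \<Rightarrow> real \<Rightarrow> real" where "FF \<nu> y = (\<Sum>m. cc \<nu> m * y^m)"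
definition F1 :: "real \<Rightarrow> real \<Rightarrow> real" where "F1 \<nu> y = (\<Sum>m. diffs (cc \<nu>) m * y^m)"
definition F2 :: "real \<Rightarrow> real \<Rightarrow> real" where "F2 \<nu> y = (\<Sum>m. diffs (diffs (cc \<nu>)) m * y^m)"

lemma poch_ge1: "(z::real) \<ge> 1 \<Longrightarrow> pochhammer z n \<ge> 1"
proof (induction n)
  case 0 then show ?case by simp
next
  case (Suc n)
  then have "pochhammer z n * 1 \<le> pochhammer z n * (z + real n)"
    by (intro mult_left_mono) auto
  with Suc have "1 \<le> pochhammer z n * (z + real n)" by linarith
  then show ?case using Suc by (simp add: pochhammer_Suc)
qed

lemma cc_abs: "\<nu> \<ge> 0 \<Longrightarrow> \<bar>cc \<nu> m\<bar> \<le> inverse (fact m)"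
proof -
  assume "\<nu> \<ge> 0"
  then have p: "pochhammer (\<nu>+1) m \<ge> 1" by (intro poch_ge1) auto
  have f: "(fact m::real) \<ge> 1" by simp
  have "(1::real) \<le> 4^m" by simp
  have "fact m * 1 * 1 \<le> fact m * pochhammer (\<nu>+1) m * (4::real)^m"
    using p f \<open>(1::real) \<le> 4^m\<close> by (intro mult_mono) auto
  then show ?thesis unfolding cc_def using f
    by (simp add: abs_mult power_abs divide_simps)
qed

lemma cc_summable: "\<nu> \<ge> 0 \<Longrightarrow> summable (\<lambda>m. cc \<nu> m * y^m)"
proof (rule summable_comparison_test[OF _ summable_exp[of "\<bar>y\<bar>"]])
  assume "\<nu> \<ge> 0"
  show "\<exists>N. \<forall>n\<ge>N. norm (cc \<nu> n * y ^ n) \<le> inverse (fact n) * \<bar>y\<bar> ^ n"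
    using cc_abs[OF \<open>\<nu> \<ge> 0\<close>]
    by (auto simp: abs_mult power_abs intro!: mult_right_mono)
qed

lemma FF_deriv: "\<nu> \<ge> 0 \<Longrightarrow> (FF \<nu> has_real_derivative F1 \<nu> y) (at y)"
  unfolding FF_def[abs_def] F1_def
  by (rule termdiffs_strong_converges_everywhere) (rule cc_summable)

lemma F1_deriv: "\<nu> \<ge> 0 \<Longrightarrow> (F1 \<nu> has_real_derivative F2 \<nu> y) (at y)"
  unfolding F1_def[abs_def] F2_def
  by (rule termdiffs_strong_converges_everywhere) (rule termdiff_converges_all, rule cc_summable)

lemma rho_eq:
  assumes "d > 0" "s \<ge> 0"
  shows "rho d s = FF (real d / 2) (s^2)"
proof (cases "s = 0")
  case True
  then show ?thesis unfolding rho_def FF_def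
    using suminf_finite[of "{0}" "\<lambda>m. cc (real d / 2) m * 0 ^ m"]
    by (simp add: cc_def)
next
  case False
  define \<nu> where "\<nu> = real d / 2"
  have nu: "\<nu> > 0" using assms by (simp add: \<nu>_def)
  have G: "Gamma (\<nu> + 1) > 0" using nu by simp
  have nn: "\<nu> + 1 \<notin> \<int>\<^sub>\<le>\<^sub>0" using nu
    using nonpos_Ints_nonpos[of "\<nu>+1"] by force
  have trm: "(-1) ^ m / (fact m * Gamma (real m + \<nu> + 1)) * (s / 2) ^ (2 * m)
        = cc \<nu> m * (s^2)^m / Gamma (\<nu>+1)" for m
  proof -
    have e1: "Gamma (real m + \<nu> + 1) = pochhammer (\<nu>+1) m * Gamma (\<nu>+1)"
      using pochhammer_Gamma[OF nn, of m] G by (simp add: field_simps)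
    have e2: "(s/2)^(2*m) = (s^2)^m / 4^m"
      by (simp add: power_mult power_divide)
    show ?thesis unfolding cc_def e1 e2 using G
      by (simp add: field_simps del: power_mult_distrib)
  qed
  have sum: "(\<Sum>m. (-1) ^ m / (fact m * Gamma (real m + \<nu> + 1)) * (s / 2) ^ (2 * m))
      = FF \<nu> (s^2) / Gamma (\<nu>+1)"
    unfolding trm FF_def using cc_summable[of \<nu> "s^2"] nu
    by (intro suminf_divide) auto
  have pw: "(2 / s) powr \<nu> * (s / 2) powr \<nu> = 1"
    using False assms by (simp add: powr_mult[symmetric])
  show ?thesis
    unfolding rho_def bessel_J_def \<nu>_def[symmetric] sum using False G
    using pw by (simp add: field_simps)
qed



lemma cc_Suc: "\<nu> \<ge> 0 \<Longrightarrow> cc \<nu> (Suc m) = - cc \<nu> m / (4*(real m+1)*(\<nu>+1+real m))"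
  unfolding cc_def using pochhammer_pos[of "\<nu>+1" m]
  by (simp add: pochhammer_Suc field_simps)

lemma cc2: "cc \<nu> (Suc (Suc 0)) = 1 / (32*(\<nu>+1)*(\<nu>+2))"
  unfolding cc_def by (simp add: pochhammer_Suc numeral_2_eq_2 field_simps)

lemma cc1: "cc \<nu> (Suc 0) = - 1 / (4*(\<nu>+1))"
  unfolding cc_def by (simp add: field_simps)

lemma ee_bound:
  assumes "\<nu> \<ge> 1"
  shows "(real n+1)*(real n+2)*\<bar>cc \<nu> (n+2)\<bar> \<le> (1/(16*(\<nu>+1)*(\<nu>+2))) * (1/16)^n"
proof (induction n)
  case 0
  have h: "\<bar>cc \<nu> (0+2)\<bar> = 1/(32*(\<nu>+1)*(\<nu>+2))" using cc2[of \<nu>] assms by simp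
  have g: "\<And>P::real. (real 0+1)*(real 0+2)*(1/(32*P)) \<le> 1/(16*P)*(1/16)^0" by simp
  show ?case using g[of "(\<nu>+1)*(\<nu>+2)"] unfolding h by (simp only: mult.assoc)
next
  case (Suc n)
  define C where "C = \<bar>cc \<nu> (n+2)\<bar>"
  define D where "D = \<nu>+real n+3"
  have D: "D > 0" using assms by (simp add: D_def)
  have "cc \<nu> (Suc n + 2) = - cc \<nu> (n+2) / (4*(real (n+2)+1)*(\<nu>+1+real (n+2)))"
    using cc_Suc[of \<nu> "n+2"] assms by simp
  also have "4*(real (n+2)+1)*(\<nu>+1+real (n+2)) = 4*(real n+3)*D" by (simp add: D_def algebra_simps)
  finally have "\<bar>cc \<nu> (Suc n + 2)\<bar> = C / (4*(real n+3)*D)"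
    using D by (simp add: C_def abs_mult abs_divide)
  then have "(real (Suc n)+1)*(real (Suc n)+2)*\<bar>cc \<nu> (Suc n+2)\<bar>
      = ((real n+1)*(real n+2)*C) * (1 / (4*(real n+1)*D))"
  proof -
    have n1: "4*(real n+3)*D \<noteq> 0" "4*(real n+1)*D \<noteq> 0" "D \<noteq> 0" using D by auto
    have "(real (Suc n)+1)*(real (Suc n)+2)*(C / (4*(real n+3)*D)) = (real n+2)*C/(4*D)"
      using n1 by (simp add: field_simps)
    moreover have "((real n+1)*(real n+2)*C) * (1 / (4*(real n+1)*D)) = (real n+2)*C/(4*D)"
      using n1 by (simp add: field_simps)
    ultimately show ?thesis using \<open>\<bar>cc \<nu> (Suc n + 2)\<bar> = C / (4*(real n+3)*D)\<close> by simp
  qed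
  also have "\<dots> \<le> ((real n+1)*(real n+2)*C) * (1/16)"
  proof (rule mult_left_mono)
    have "4*1*4 \<le> 4*(real n+1)*D" using assms
      by (intro mult_mono) (auto simp: D_def)
    then show "1 / (4*(real n+1)*D) \<le> 1/16"
      by (intro divide_left_mono) auto
  qed (auto simp: C_def)
  also have "\<dots> \<le> (1/(16*(\<nu>+1)*(\<nu>+2))) * (1/16)^n * (1/16)"
    using Suc.IH by (intro mult_right_mono) (auto simp: C_def)
  finally show ?case by simp
qed

definition EE :: "real \<Rightarrow> real" where "EE \<nu> = 1/(15*(\<nu>+1)*(\<nu>+2))"

lemma geo_sum: "summable (\<lambda>n. (1/(16*(\<nu>+1)*(\<nu>+2))) * (1/16::real)^n)"
   "(\<Sum>n. (1/(16*(\<nu>+1)*(\<nu>+2))) * (1/16::real)^n) = EE \<nu>"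
proof -
  show "summable (\<lambda>n. (1/(16*(\<nu>+1)*(\<nu>+2))) * (1/16::real)^n)"
    by (intro summable_mult summable_geometric) simp
  then show "(\<Sum>n. (1/(16*(\<nu>+1)*(\<nu>+2))) * (1/16::real)^n) = EE \<nu>"
  proof -
    have "(\<Sum>n. (1/(16*(\<nu>+1)*(\<nu>+2))) * (1/16::real)^n) = (1/(16*(\<nu>+1)*(\<nu>+2))) * (\<Sum>n. (1/16::real)^n)"
      by (rule suminf_mult) simp
    also have "(\<Sum>n. (1/16::real)^n) = 1 / (1 - 1/16)" by (rule suminf_geometric) simp
    moreover have g: "\<And>P::real. 1/(16*P) * (1/(1-1/16)) = 1/(15*P)" by simp
    ultimately show ?thesis using g[of "(\<nu>+1)*(\<nu>+2)"] unfolding EE_def by (simp only: mult.assoc)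
  qed
qed

lemma F2_bound:
  assumes "\<nu> \<ge> 1" "\<bar>w\<bar> \<le> 1"
  shows "\<bar>F2 \<nu> w\<bar> \<le> EE \<nu>"
proof -
  let ?g = "\<lambda>n. (1/(16*(\<nu>+1)*(\<nu>+2))) * (1/16::real)^n"
  let ?t = "\<lambda>n. diffs (diffs (cc \<nu>)) n * w^n"
  have tb: "norm (?t n) \<le> ?g n" for n
  proof -
    have "diffs (diffs (cc \<nu>)) n = (real n+1)*(real n+2)* cc \<nu> (n+2)"
      by (simp add: diffs_def algebra_simps)
    then have "norm (?t n) = (real n+1)*(real n+2)*\<bar>cc \<nu> (n+2)\<bar> * \<bar>w\<bar>^n"
      by (simp add: abs_mult power_abs)
    also have "\<dots> \<le> (real n+1)*(real n+2)*\<bar>cc \<nu> (n+2)\<bar> * 1"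
      using assms by (intro mult_left_mono) (auto simp: power_le_one)
    also have "\<dots> \<le> ?g n" using ee_bound[OF assms(1), of n] by simp
    finally show ?thesis .
  qed
  have s1: "summable (\<lambda>n. norm (?t n))"
    by (rule summable_comparison_test[OF _ geo_sum(1)]) (use tb in auto)
  have "\<bar>F2 \<nu> w\<bar> = norm (suminf ?t)" by (simp add: F2_def)
  also have "\<dots> \<le> (\<Sum>n. norm (?t n))" by (rule summable_norm[OF s1])
  also have "\<dots> \<le> suminf ?g" by (rule suminf_le[OF tb s1 geo_sum(1)])
  finally show ?thesis using geo_sum(2) by simp
qed

lemma F1_bound:
  assumes "\<nu> \<ge> 1" "0 \<le> w" "w \<le> 1"
  shows "F1 \<nu> w \<le> - 1 / (4*(\<nu>+1)) + w * EE \<nu>"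
proof -
  let ?g = "\<lambda>n. w * ((1/(16*(\<nu>+1)*(\<nu>+2))) * (1/16::real)^n)"
  let ?t = "\<lambda>n. diffs (cc \<nu>) (Suc n) * w^(Suc n)"
  have tb: "norm (?t n) \<le> ?g n" for n
  proof -
    have "diffs (cc \<nu>) (Suc n) = (real n+2)* cc \<nu> (n+2)"
      by (simp add: diffs_def algebra_simps)
    then have "norm (?t n) = w * ((real n+2)*\<bar>cc \<nu> (n+2)\<bar> * w^n)"
      using assms by (simp add: abs_mult power_abs)
    also have "\<dots> \<le> w * ((real n+1)*(real n+2)*\<bar>cc \<nu> (n+2)\<bar> * 1)"
      using assms by (intro mult_left_mono mult_mono) (auto simp: power_le_one)
    also have "\<dots> \<le> ?g n" using ee_bound[OF assms(1), of n] assms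
      by (intro mult_left_mono) auto
    finally show ?thesis .
  qed
  have sg: "summable ?g" using geo_sum(1) by (rule summable_mult)
  have s1: "summable (\<lambda>n. norm (?t n))"
    by (rule summable_comparison_test[OF _ sg]) (use tb in auto)
  have sd: "summable (\<lambda>n. diffs (cc \<nu>) n * w^n)"
    by (rule termdiff_converges_all, rule cc_summable) (use assms in auto)
  have "F1 \<nu> w = diffs (cc \<nu>) 0 + suminf ?t"
    unfolding F1_def using suminf_split_head[OF sd] by simp
  also have "diffs (cc \<nu>) 0 = - 1 / (4*(\<nu>+1))" by (simp add: diffs_def cc1)
  also have "suminf ?t \<le> (\<Sum>n. norm (?t n))" 
    using summable_norm[OF s1] by simp
  also have "\<dots> \<le> suminf ?g" by (rule suminf_le[OF tb s1 sg])
  also have "suminf ?g = w * EE \<nu>"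
    by (subst suminf_mult[OF geo_sum(1)]) (simp only: geo_sum(2))
  finally show ?thesis by simp
qed



lemma inner_line: "(y + u *\<^sub>R axis j 1) \<bullet> (y + u *\<^sub>R axis j 1) = y \<bullet> y + 2*u*(y$j) + u^2"
  for y :: "real^'n"
  by (simp add: inner_add_left inner_add_right inner_axis inner_axis' inner_commute power2_eq_square algebra_simps)

lemma comp_line: "(y + u *\<^sub>R axis i 1) $ j = y$j + u * (if j = i then 1 else 0)"
  for y :: "real^'n"
  by (simp add: axis_def)

lemma partial_radial:
  fixes a :: real
  assumes "\<And>y. (F has_real_derivative F' y) (at y)"
  shows "partial (\<lambda>t::real^'n. F (a*(t\<bullet>t))) j = (\<lambda>y. F' (a*(y\<bullet>y)) * (2*a*y$j))"
proof
  fix y :: "real^'n"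
  have "((\<lambda>u. F (a*(y \<bullet> y + 2*u*(y$j) + u^2))) has_real_derivative
          F' (a*(y \<bullet> y + 2*0*(y$j) + 0^2)) * (a*(2*(y$j) + 2*0))) (at 0)"
    by (rule DERIV_chain2[OF assms]) (auto intro!: derivative_eq_intros)
  then show "partial (\<lambda>t. F (a*(t\<bullet>t))) j y = F' (a*(y\<bullet>y)) * (2*a*y$j)"
    unfolding partial_def inner_line by (intro DERIV_imp_deriv) (simp add: algebra_simps)
qed

lemma partial_radial2:
  fixes a :: real
  assumes "\<And>y. (F has_real_derivative F' y) (at y)"
  shows "partial (\<lambda>y::real^'n. F (a*(y\<bullet>y)) * (2*a*y$j)) i x
     = F' (a*(x\<bullet>x)) * (2*a*x$i) * (2*a*x$j) + F (a*(x\<bullet>x)) * (2*a*(if j = i then 1 else 0))"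
proof -
  have "((\<lambda>u. F (a*(x \<bullet> x + 2*u*(x$i) + u^2)) * (2*a*(x$j + u * (if j = i then 1 else 0))))
      has_real_derivative
        F' (a*(x \<bullet> x + 2*0*(x$i) + 0^2)) * (a*(2*(x$i) + 2*0)) * (2*a*(x$j + 0 * (if j = i then 1 else 0)))
        + (2*a*(0 + 1 * (if j = i then 1 else 0))) * F (a*(x \<bullet> x + 2*0*(x$i) + 0^2))) (at 0)"
    by (rule DERIV_mult[OF DERIV_chain2[OF assms]]) (auto intro!: derivative_eq_intros)
  then show ?thesis
    unfolding partial_def inner_line comp_line by (intro DERIV_imp_deriv) (simp add: algebra_simps)
qed



lemma second: "(0.6::real) < (1 / sqrt 5) powr (-2)"
proof -
  have "(1 / sqrt 5) powr (-2) = inverse ((1/sqrt 5) powr 2)" by (simp add: powr_minus)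
  also have "(1/sqrt (5::real)) powr 2 = (1/sqrt 5)^2" by (simp add: powr_numeral)
  also have "(1/sqrt (5::real))^2 = 1/5" by (simp add: power_divide)
  finally show ?thesis by simp
qed

lemma kern_eq:
  assumes "\<kappa> \<ge> 0"
  shows "kern \<kappa> = (\<lambda>t::real^'n. FF (real CARD('n) / 2) ((4*\<kappa>^2)*(t\<bullet>t)))"
proof
  fix t :: "real^'n"
  have "kern \<kappa> t = FF (real CARD('n) / 2) ((2*\<kappa>*norm t)^2)"
    unfolding kern_def using assms by (intro rho_eq) auto
  also have "(2*\<kappa>*norm t)^2 = (4*\<kappa>^2)*(t\<bullet>t)"
    by (simp add: power_mult_distrib power2_norm_eq_inner)
  finally show "kern \<kappa> t = FF (real CARD('n) / 2) ((4*\<kappa>^2)*(t\<bullet>t))" .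
qed

lemma hform:
  fixes x v :: "real^'n"
  shows "(\<Sum>i\<in>UNIV. \<Sum>j\<in>UNIV. v$i * (P * (2*a*x$i) * (2*a*x$j) + Q * (2*a*(if j = i then 1 else 0))) * v$j)
     = 4*a^2*P*(x\<bullet>v)^2 + 2*a*Q*(v\<bullet>v)"
proof -
  have "(\<Sum>j\<in>UNIV. v$i * (P * (2*a*x$i) * (2*a*x$j) + Q * (2*a*(if j = i then 1 else 0))) * v$j)
      = (4*a^2*P*(v$i*x$i)) * (x\<bullet>v) + 2*a*Q*(v$i * (v$i))" for i
  proof -
    have "(\<Sum>j\<in>UNIV. v$i * (P * (2*a*x$i) * (2*a*x$j) + Q * (2*a*(if j = i then 1 else 0))) * v$j)
       = (\<Sum>j\<in>UNIV. (4*a^2*P*(v$i*x$i)) * (x$j * (v$j)) + (if j = i then 2*a*Q*(v$i * (v$i)) else 0))"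
      by (intro sum.cong) (auto simp: power2_eq_square algebra_simps)
    also have "\<dots> = (4*a^2*P*(v$i*x$i)) * (x\<bullet>v) + 2*a*Q*(v$i * (v$i))"
      by (simp add: sum.distrib sum_distrib_left[symmetric] inner_vec_def)
    finally show ?thesis .
  qed
  then have "(\<Sum>i\<in>UNIV. \<Sum>j\<in>UNIV. v$i * (P * (2*a*x$i) * (2*a*x$j) + Q * (2*a*(if j = i then 1 else 0))) * v$j)
     = (\<Sum>i\<in>UNIV. (4*a^2*P*(v$i*x$i)) * (x\<bullet>v) + 2*a*Q*(v$i * (v$i)))" by simp
  also have "\<dots> = 4*a^2*P*(x\<bullet>v)*(x\<bullet>v) + 2*a*Q*(v\<bullet>v)"
    by (simp add: sum.distrib sum_distrib_left[symmetric] sum_distrib_right[symmetric] inner_vec_def mult.commute)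
  finally show ?thesis by (simp add: power2_eq_square)
qed



theorem lemma3:
  fixes \<kappa> :: real and x x' v :: "real ^ 'n"
  assumes "CARD('n) = 2 \<or> CARD('n) = 3"
    and "\<kappa> > 0"
    and "fisher_dist \<kappa> x x' \<le> 1 / sqrt 5"
  shows "- hessian_form (kern \<kappa>) (x - x') v \<ge> 0.6 * (fisher_norm \<kappa> v)\<^sup>2
         \<and> (0.6::real) < (1 / sqrt 5) powr (-2)"
proof
  show "(0.6::real) < (1 / sqrt 5) powr (-2)" by (rule second)
  define \<nu> where "\<nu> = real CARD('n) / 2"
  define a where "a = 4*\<kappa>^2"
  define X where "X = x - x'"
  define w where "w = a * (X \<bullet> X)"
  have nu: "\<nu> = 1 \<or> \<nu> = 3/2" using assms(1) by (auto simp: \<nu>_def)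
  have nu1: "\<nu> \<ge> 1" "\<nu> \<le> 3/2" using nu by auto
  have dnu: "real CARD('n) + 2 = 2*\<nu>+2" by (simp add: \<nu>_def)
  have a0: "a > 0" using assms(2) by (simp add: a_def)
  have K: "kern \<kappa> = (\<lambda>t::real^'n. FF \<nu> (a*(t\<bullet>t)))"
    unfolding a_def \<nu>_def using assms(2) by (intro kern_eq) simp
  have P1: "partial (kern \<kappa> :: real^'n \<Rightarrow> real) j = (\<lambda>y. F1 \<nu> (a*(y\<bullet>y)) * (2*a*y$j))" for j
    unfolding K by (rule partial_radial[of "FF \<nu>" "F1 \<nu>"]) (rule FF_deriv, use nu1 in simp)
  have H: "hessian (kern \<kappa>) X i j = F2 \<nu> w * (2*a*X$i) * (2*a*X$j) + F1 \<nu> w * (2*a*(if j = i then 1 else 0))" for i j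
    unfolding hessian_def P1 w_def by (rule partial_radial2[of "F1 \<nu>" "F2 \<nu>"]) (rule F1_deriv, use nu1 in simp)
  have HF: "hessian_form (kern \<kappa>) X v = 4*a^2*F2 \<nu> w*(X\<bullet>v)^2 + 2*a*F1 \<nu> w*(v\<bullet>v)"
    unfolding hessian_form_def H by (rule hform)
  have w0: "w \<ge> 0" using a0 by (simp add: w_def)
  have "2 * \<kappa> * norm X / sqrt (2*\<nu>+2) \<le> 1 / sqrt 5"
    using assms(3) by (simp add: fisher_dist_def X_def dnu)
  then have "(2 * \<kappa> * norm X / sqrt (2*\<nu>+2))^2 \<le> (1 / sqrt 5)^2"
    using assms(2) nu1 by (intro power_mono) auto
  then have "w / (2*\<nu>+2) \<le> 1/5"
    using nu1 by (simp add: w_def a_def power_divide power_mult_distrib power2_norm_eq_inner)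
  then have w1: "w \<le> 1" using nu1 by (simp add: field_simps)
  have FN: "(fisher_norm \<kappa> v)^2 = a*(v\<bullet>v)/(2*\<nu>+2)"
    unfolding fisher_norm_def dnu using nu1
    by (simp add: a_def power_divide power_mult_distrib power2_norm_eq_inner)
  define E where "E = EE \<nu>"
  have E0: "E \<ge> 0" using nu1 by (simp add: E_def EE_def)
  have b1: "F1 \<nu> w \<le> - 1 / (4*(\<nu>+1)) + w * E" unfolding E_def by (rule F1_bound) (use nu1 w0 w1 in auto)
  have b2: "\<bar>F2 \<nu> w\<bar> \<le> E" unfolding E_def by (rule F2_bound) (use nu1 w0 w1 in auto)
  define V where "V = v\<bullet>v"
  define Q where "Q = (X\<bullet>v)^2"
  have V0: "V \<ge> 0" by (simp add: V_def)
  have Q0: "Q \<ge> 0" by (simp add: Q_def)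
  have QV: "Q \<le> (X\<bullet>X) * V"
  proof -
    have "\<bar>X\<bullet>v\<bar> \<le> norm X * norm v" by (rule Cauchy_Schwarz_ineq2)
    then have "\<bar>X\<bullet>v\<bar>^2 \<le> (norm X * norm v)^2" by (intro power_mono) auto
    then show ?thesis by (simp add: Q_def V_def power_mult_distrib power2_norm_eq_inner)
  qed
  have aQ: "a*Q \<le> w*V" using QV a0 by (simp add: w_def mult.assoc mult_left_mono)
  have t1: "- (4*a^2*F2 \<nu> w*Q) \<ge> - (4*a*E*(w*V))"
  proof -
    have "F2 \<nu> w * (a*Q) \<le> E * (w*V)"
    proof -
      have "F2 \<nu> w * (a*Q) \<le> E * (a*Q)" using b2 a0 Q0 by (intro mult_right_mono) auto
      also have "\<dots> \<le> E * (w*V)" using aQ E0 by (intro mult_left_mono) auto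
      finally show ?thesis .
    qed
    then have "4*a*(F2 \<nu> w * (a*Q)) \<le> 4*a*(E * (w*V))" using a0 by (intro mult_left_mono) auto
    then show ?thesis by (simp add: power2_eq_square algebra_simps)
  qed
  have t2: "- (2*a*F1 \<nu> w*V) \<ge> 2*a*V*(1 / (4*(\<nu>+1)) - w*E)"
  proof -
    have "(2*a*V) * F1 \<nu> w \<le> (2*a*V) * (- 1 / (4*(\<nu>+1)) + w * E)"
      using b1 a0 V0 by (intro mult_left_mono) auto
    then show ?thesis by (simp add: algebra_simps)
  qed
  define R where "R = 1/(4*(\<nu>+1))"
  have R2: "1/(2*(\<nu>+1)) = 2*R"
  proof -
    have g: "\<And>P::real. 1/(2*P) = 2*(1/(4*P))" by simp
    show ?thesis unfolding R_def by (rule g)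
  qed
  have key: "a*V*(2*R - 6*w*E) \<ge> a*V*(0.3/(\<nu>+1))"
  proof (rule mult_left_mono)
    have "6*w*E \<le> 6*E" using w1 w0 E0 by (intro mult_mono) auto
    also have "6*E \<le> 0.2/(\<nu>+1)"
      using nu proof
      assume h: "\<nu> = 1" show ?thesis unfolding E_def h by (simp add: EE_def)
    next
      assume h: "\<nu> = 3/2" show ?thesis unfolding E_def h by (simp add: EE_def)
    qed
    finally have "6*w*E \<le> 0.2/(\<nu>+1)" .
    moreover have "1/(2*(\<nu>+1)) = 0.3/(\<nu>+1) + 0.2/(\<nu>+1)"
      unfolding add_divide_distrib[symmetric] by simp
    ultimately show "0.3/(\<nu>+1) \<le> 2*R - 6*w*E" unfolding R2
      by (smt (verit))
  qed (use a0 V0 in simp)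
  define h1 where "h1 = 4*a^2*F2 \<nu> w*Q"
  define h2 where "h2 = 2*a*F1 \<nu> w*V"
  define m1 where "m1 = 4*a*E*(w*V)"
  define m2 where "m2 = 2*a*V*(R - w*E)"
  define tg where "tg = a*V*(0.3/(\<nu>+1))"
  have e1: "hessian_form (kern \<kappa>) X v = h1 + h2" unfolding HF h1_def h2_def Q_def V_def ..
  have e2: "- h1 \<ge> - m1" using t1 unfolding h1_def m1_def .
  have e3: "- h2 \<ge> m2" using t2 unfolding h2_def m2_def R_def .
  have e4: "m2 - m1 \<ge> tg" using key unfolding m1_def m2_def tg_def by (simp add: algebra_simps)
  have "- hessian_form (kern \<kappa>) X v \<ge> a*V*(0.3/(\<nu>+1))"
    using e1 e2 e3 e4 unfolding tg_def[symmetric] by linarith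
  moreover have "0.6 * (fisher_norm \<kappa> v)\<^sup>2 = a*V*(0.3/(\<nu>+1))"
    unfolding FN V_def using nu1 by (simp add: field_simps)
  ultimately have "- hessian_form (kern \<kappa>) X v \<ge> 0.6 * (fisher_norm \<kappa> v)\<^sup>2"
    by (simp only:)
  then show "- hessian_form (kern \<kappa>) (x - x') v \<ge> 0.6 * (fisher_norm \<kappa> v)\<^sup>2"
    unfolding X_def .
qed

end
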